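(* Let $(X,d)$ be a metric space and $\Phi'_n,\Phi''_n:X\to X$, $n\in\mathbb{N}$, maps such that for constants $K>0$, $\theta<1$: $\mathrm{diam}(X)\le K$ and for all $n$ and $x_1,x_2\in X$, $d(\Phi'_n(x_1),\Phi'_n(x_2))\le\theta d(x_1,x_2)$ and $d(\Phi''_n(x_1),\Phi''_n(x_2))\le\theta d(x_1,x_2)$. Suppose there are constants $C>0$, $\kappa>0$ such that $d(\Phi'_n(x),\Phi''_n(x))\le C/n^\kappa$ for all $x\in X$ and $n\in\mathbb{N}$. Then there is a constant $\bar C$ such that for all $x',x''\in X$ and $n\in\mathbb{N}$, $$d\big(\Phi'_n\circ\cdots\circ\Phi'_1(x'),\ \Phi''_n\circ\cdots\circ\Phi''_1(x'')\big)\le\frac{\bar C}{n^\kappa}.$$ *)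

theory Defs
  imports "HOL-Analysis.Analysis"
begin

fun comp_seq :: "(nat \<Rightarrow> 'a \<Rightarrow> 'a) \<Rightarrow> nat \<Rightarrow> 'a \<Rightarrow> 'a" where
  "comp_seq Phi 0 x = x"
| "comp_seq Phi (Suc n) x = Phi (Suc n) (comp_seq Phi n x)"

end

theory Submission
  imports Defs "HOL-Real_Asymp.Real_Asymp"
begin

lemma lim_aux: "((\<lambda>n::nat. (1 + 1 / real n) powr k) \<longlongrightarrow> 1) sequentially"
  by real_asymp

theorem propositionC3:
  fixes Phi1 Phi2 :: "nat \<Rightarrow> 'a::metric_space \<Rightarrow> 'a"
    and K \<theta> C \<kappa> :: real
  assumes "K > 0" and "\<theta> < 1"
    and diam: "\<forall>x y :: 'a. dist x y \<le> K"
    and contr1: "\<forall>n \<ge> 1. \<forall>x1 x2. dist (Phi1 n x1) (Phi1 n x2) \<le> \<theta> * dist x1 x2"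
    and contr2: "\<forall>n \<ge> 1. \<forall>x1 x2. dist (Phi2 n x1) (Phi2 n x2) \<le> \<theta> * dist x1 x2"
    and "C > 0" and "\<kappa> > 0"
    and close: "\<forall>n \<ge> 1. \<forall>x. dist (Phi1 n x) (Phi2 n x) \<le> C / real n powr \<kappa>"
  shows "\<exists>Cbar. \<forall>x' x''. \<forall>n \<ge> 1.
           dist (comp_seq Phi1 n x') (comp_seq Phi2 n x'') \<le> Cbar / real n powr \<kappa>"
proof -
  define t where "t = max \<theta> 0"
  have t0: "t \<ge> 0" and t1: "t < 1" using assms(2) by (auto simp: t_def)
  have ct: "dist (Phi1 n x1) (Phi1 n x2) \<le> t * dist x1 x2" if "n \<ge> 1" for n x1 x2
  proof -
    have "\<theta> * dist x1 x2 \<le> t * dist x1 x2" by (auto simp: t_def intro!: mult_right_mono)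
    thus ?thesis using contr1 that by (meson order_trans)
  qed
  have rec: "dist (comp_seq Phi1 (Suc n) a) (comp_seq Phi2 (Suc n) b)
      \<le> t * dist (comp_seq Phi1 n a) (comp_seq Phi2 n b) + C / real (Suc n) powr \<kappa>" for n a b
  proof -
    let ?u = "comp_seq Phi1 n a" and ?v = "comp_seq Phi2 n b"
    have "dist (Phi1 (Suc n) ?u) (Phi2 (Suc n) ?v) \<le> dist (Phi1 (Suc n) ?u) (Phi1 (Suc n) ?v) + dist (Phi1 (Suc n) ?v) (Phi2 (Suc n) ?v)"
      by (rule dist_triangle)
    also have "\<dots> \<le> t * dist ?u ?v + C / real (Suc n) powr \<kappa>"
    proof (rule add_mono)
      show "dist (Phi1 (Suc n) ?u) (Phi1 (Suc n) ?v) \<le> t * dist ?u ?v" using ct[of "Suc n" ?u ?v] by simp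
      show "dist (Phi1 (Suc n) ?v) (Phi2 (Suc n) ?v) \<le> C / real (Suc n) powr \<kappa>"
        using close[rule_format, of "Suc n" ?v] by simp
    qed
    finally show ?thesis by simp
  qed
  define s where "s = 2 / (1 + t)"
  have s1: "s > 1" using t0 t1 by (auto simp: s_def field_simps)
  have ts: "t * s < 1" using t0 t1 by (auto simp: s_def field_simps)
  have "eventually (\<lambda>n. (1 + 1 / real n) powr \<kappa> < s) sequentially"
    using lim_aux[of \<kappa>] s1 by (simp add: order_tendstoD(2))
  then obtain N0 where N0: "\<And>n. n \<ge> N0 \<Longrightarrow> (1 + 1 / real n) powr \<kappa> < s"
    by (auto simp: eventually_sequentially)
  define N where "N = max N0 1"
  have N1: "N \<ge> 1" and NN: "\<And>n. n \<ge> N \<Longrightarrow> (1 + 1 / real n) powr \<kappa> < s"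
    using N0 by (auto simp: N_def)
  define B where "B = max (K * real (N+1) powr \<kappa>) (C / (1 - t * s))"
  have BK: "K * real (N+1) powr \<kappa> \<le> B" and BC: "C / (1 - t * s) \<le> B" by (auto simp: B_def)
  have BC': "t * s * B + C \<le> B"
  proof -
    have "C \<le> (1 - t * s) * B" using BC ts by (simp add: pos_divide_le_eq mult.commute)
    thus ?thesis by (simp add: algebra_simps)
  qed
  have B0: "B \<ge> 0" using BC ts \<open>C > 0\<close> by (smt (verit) divide_pos_pos)
  have main: "n \<ge> 1 \<longrightarrow> dist (comp_seq Phi1 n a) (comp_seq Phi2 n b) \<le> B / real n powr \<kappa>" for n a b
  proof (induction n)
    case 0 then show ?case by simp
  next
    case (Suc n)
    show ?case
    proof (cases "n \<le> N")
      case True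
      have "real (Suc n) powr \<kappa> \<le> real (N+1) powr \<kappa>"
        using True \<open>\<kappa> > 0\<close> by (intro powr_mono2) auto
      hence "K * real (Suc n) powr \<kappa> \<le> B" using BK \<open>K>0\<close>
        by (smt (verit) mult_left_mono)
      hence "K \<le> B / real (Suc n) powr \<kappa>" by (simp add: pos_le_divide_eq)
      then show ?thesis using diam by (meson order_trans)
    next
      case False
      hence n1: "n \<ge> 1" "n \<ge> N" using N1 by auto
      have IH: "dist (comp_seq Phi1 n a) (comp_seq Phi2 n b) \<le> B / real n powr \<kappa>"
        using Suc.IH n1 by simp
      have np: "real n powr \<kappa> > 0" "real (Suc n) powr \<kappa> > 0" using n1 by auto
      have q: "real (Suc n) powr \<kappa> / real n powr \<kappa> \<le> s"
      proof -
        have "real (Suc n) powr \<kappa> / real n powr \<kappa> = (real (Suc n) / real n) powr \<kappa>"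
          by (simp add: powr_divide)
        also have "real (Suc n) / real n = 1 + 1 / real n" using n1 by (simp add: field_simps)
        finally show ?thesis using NN[OF n1(2)] by simp
      qed
      have "B / real n powr \<kappa> = (real (Suc n) powr \<kappa> / real n powr \<kappa>) * B / real (Suc n) powr \<kappa>"
        using np by (simp add: field_simps)
      also have "\<dots> \<le> s * B / real (Suc n) powr \<kappa>"
        using q B0 np by (intro divide_right_mono mult_right_mono) auto
      finally have b1: "B / real n powr \<kappa> \<le> s * B / real (Suc n) powr \<kappa>" .
      have "dist (comp_seq Phi1 (Suc n) a) (comp_seq Phi2 (Suc n) b)
          \<le> t * (B / real n powr \<kappa>) + C / real (Suc n) powr \<kappa>"
        using rec[of n a b] IH t0 by (smt (verit) mult_left_mono)
      also have "\<dots> \<le> t * (s * B / real (Suc n) powr \<kappa>) + C / real (Suc n) powr \<kappa>"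
        using mult_left_mono[OF b1 t0] by simp
      also have "\<dots> = (t * s * B + C) / real (Suc n) powr \<kappa>" by (simp add: field_simps)
      also have "\<dots> \<le> B / real (Suc n) powr \<kappa>"
        using BC' np by (simp add: divide_right_mono)
      finally show ?thesis by simp
    qed
  qed
  show ?thesis using main by blast
qed

end
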